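(* Let $V\subset\mathbb{R}^3$ be covered by a conforming oriented tetrahedral mesh $\bigcup_e T_e$, let $p\ge2$, and on each element consider the edge, edge-face, face and cell functions listed below, assembled globally so that edge functions are shared by all elements containing that edge, face functions (including edge-face functions of that face) by the two elements sharing that face, and cell functions are local to each element. Then every finite linear combination of the assembled functions lies in $H(\operatorname{sym}\operatorname{Curl},V)$; equivalently, for every interior interface $\Xi$ between two elements with normal $\mathbf{n}$, the jump of $\operatorname{sym}(\mathbf{P}\operatorname{Anti}(\mathbf{n})^T)$ across $\Xi$ vanishes. The element functions on $T$ are: (i) for each edge $j$ and $\varphi\in\mathcal{E}^p_j(T)$: $\varphi\,\mathbf{d}_1\otimes\mathbf{t}$, $\varphi\,\mathbf{d}_2\otimes\mathbf{t}$; (ii) for each face $k$ with normal $\mathbf{n}$, each edge $j$ of face $k$ and $\varphi\in\mathcal{E}^p_j(T)$: $\varphi\,\mathbf{t}\otimes\mathbf{k}$, $\varphi\,\mathbf{m}\otimes\mathbf{k}$, $\varphi\,\mathbf{n}\otimes\mathbf{k}$, with $\mathbf{t}$ the tangent of edge $j$, $\mathbf{k}$ the edge-face vector of edge $j$ satisfying $\mathbf{n}\times\mathbf{k}\ne0$, $\mathbf{m}=\mathbf{Q}\mathbf{k}$, $\mathbf{Q}=\|\mathbf{n}\|^2\mathbb{1}-\mathbf{n}\otimes\mathbf{n}$; (iii) for each face $k$ and $\varphi\in\mathcal{F}^p_k(T)$, with $j=\min\mathcal{J}_k$ and $\mathbf{t},\mathbf{m}$ as in (ii) for edge $j$: $\varphi\,\mathbf{t}\otimes\mathbf{m}$,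 $\varphi\,\mathbf{m}\otimes\mathbf{t}$, $\varphi(\mathbf{t}\otimes\mathbf{t}-\mathbf{m}\otimes\mathbf{m})$, $\varphi\,\mathbf{n}\otimes\mathbf{t}$, $\varphi\,\mathbf{n}\otimes\mathbf{m}$; (iv) cell functions $\varphi\mathbb{1}$ with $\varphi\in\bigoplus_{j}\mathcal{E}^{p+1}_j(T)\oplus\bigoplus_k\mathcal{F}^{p+1}_k(T)\oplus\mathcal{C}^{p+1}(T)$, $\varphi\,\mathbf{t}\otimes\mathbf{n}$, $\varphi\,\mathbf{m}\otimes\mathbf{n}$, $\varphi\,\mathbf{n}\otimes\mathbf{n}$ with $\varphi\in\mathcal{F}^p_k(T)$ (vectors as in (iii)), and $\varphi\mathbf{T}$ with $\varphi\in\mathcal{C}^p(T)$, $\mathbf{T}\in\mathfrak{sl}(3)$.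
   Context: $H(\operatorname{sym}\operatorname{Curl},V)=\{\mathbf{P}\in[L^2(V)]^{3\times3}:\operatorname{sym}\operatorname{Curl}\mathbf{P}\in[L^2(V)]^{3\times3}\}$, where $\operatorname{Curl}\mathbf{P}=-\mathbf{P}\times\nabla$ is the row-wise curl and $\operatorname{sym}\mathbf{A}=\frac12(\mathbf{A}+\mathbf{A}^T)$; $\operatorname{Anti}(\mathbf{v})$ is the skew matrix with $\operatorname{Anti}(\mathbf{v})\mathbf{w}=\mathbf{v}\times\mathbf{w}$; $\mathfrak{sl}(3)$ is the space of trace-free $3\times3$ matrices, $\mathbb{1}$ the identity. Each element $T=\mathbf{x}(\Omega)$ is the non-degenerate image of the reference tetrahedron $\Omega=\{(\xi,\eta,\zeta)\in[0,1]^3:\xi+\eta+\zeta\le1\}$, $\mathbf{J}=\mathrm{D}\mathbf{x}$, with barycentric coordinates $\lambda_1=1-\xi-\eta-\zeta,\lambda_2=\zeta,\lambda_3=\eta,\lambda_4=\xi$. The mesh is oriented: the local vertex numbering of each element is increasing with respect to a fixed global vertex numbering. Edges $\mathcal{J}=\{(1,2),(1,3),(1,4),(2,3),(2,4),(3,4)\}$, faces $\mathcal{K}=\{(1,2,3),(1,2,4),(1,3,4),(2,3,4)\}$, $\mathcal{J}_k$ the edges of face $k$, $\min\mathcal{J}_k$ the lexicographically smallest. Scalar spaces: an $H^1$-conforming hierarchical polytopal basis of $\mathit{P}^q(T)$ consisting of vertex functions $\lambda_i$, edge spaces $\mathcal{E}^q_j(T)$ (dimension $q-1$, vanishing on other edges),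 face spaces $\mathcal{F}^q_k(T)$ (dimension $(q-2)(q-1)/2$, vanishing on other faces), cell space $\mathcal{C}^q(T)$ (dimension $(q-3)(q-2)(q-1)/6$, vanishing on $\partial T$), such that shared edge and face functions coincide on interfaces between neighbouring elements. Vectors: tangents $\mathbf{t}=\mathbf{J}\boldsymbol{\tau}$ with $\boldsymbol{\tau}_{12}=\mathbf{e}_3,\boldsymbol{\tau}_{13}=\mathbf{e}_2,\boldsymbol{\tau}_{14}=\mathbf{e}_1,\boldsymbol{\tau}_{23}=\mathbf{e}_2-\mathbf{e}_3,\boldsymbol{\tau}_{24}=\mathbf{e}_1-\mathbf{e}_3,\boldsymbol{\tau}_{34}=\mathbf{e}_1-\mathbf{e}_2$; edge-face vectors $\mathbf{k}=\mathbf{J}^{-T}\boldsymbol{\kappa}$ with reference pairs $(1,2):\{-\mathbf{e}_2,-\mathbf{e}_1\}$, $(1,3):\{\mathbf{e}_3,-\mathbf{e}_1\}$, $(1,4):\{\mathbf{e}_3,\mathbf{e}_2\}$, $(2,3):\{\mathbf{e}_1+\mathbf{e}_2+\mathbf{e}_3,-\mathbf{e}_1\}$, $(2,4):\{\mathbf{e}_1+\mathbf{e}_2+\mathbf{e}_3,\mathbf{e}_2\}$, $(3,4):\{\mathbf{e}_1+\mathbf{e}_2+\mathbf{e}_3,-\mathbf{e}_3\}$; face normals $\mathbf{n}=(\det\mathbf{J})\mathbf{J}^{-T}\boldsymbol{\nu}$ with $\boldsymbol{\nu}_{123}=-\mathbf{e}_1,\boldsymbol{\nu}_{124}=\mathbf{e}_2,\boldsymbol{\nu}_{134}=-\mathbf{e}_3,\boldsymbol{\nu}_{234}=-\mathbf{e}_1-\mathbf{e}_2-\mathbf{e}_3$;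 for an edge with tangent $\mathbf{t}=(t_1,t_2,t_3)$, $\mathbf{d}_2=(\operatorname{sgn}_*(t_1)|t_3|,\operatorname{sgn}_*(t_2)|t_3|,-\operatorname{sgn}_*(t_3)(|t_1|+|t_2|))^T$ with $\operatorname{sgn}_*(x)=1$ if $x\ge0$, $-1$ otherwise, and $\mathbf{d}_1=\mathbf{d}_2\times\mathbf{t}$. *)

theory Defs
  imports "HOL-Analysis.Analysis"
begin

type_synonym vec3 = "real^3"
type_synonym mat3 = "real^3^3"

definition vec3 :: "real \<Rightarrow> real \<Rightarrow> real \<Rightarrow> vec3" where
  "vec3 a b c = vector [a, b, c]"

definition e1v :: vec3 where "e1v = vec3 1 0 0"
definition e2v :: vec3 where "e2v = vec3 0 1 0"
definition e3v :: vec3 where "e3v = vec3 0 0 1"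

definition outer :: "vec3 \<Rightarrow> vec3 \<Rightarrow> mat3" where
  "outer a b = (\<chi> i j. a $ i * b $ j)"

definition symm :: "mat3 \<Rightarrow> mat3" where
  "symm A = (1/2) *\<^sub>R (A + transpose A)"

text \<open>Anti v is the skew matrix with Anti v w = v cross w\<close>
definition Anti :: "vec3 \<Rightarrow> mat3" where
  "Anti v = vector [vec3 0 (- v$3) (v$2), vec3 (v$3) 0 (- v$1), vec3 (- v$2) (v$1) 0]"

definition sgn_star :: "real \<Rightarrow> real" where
  "sgn_star x = (if x \<ge> 0 then 1 else -1)"

definition d2vec :: "vec3 \<Rightarrow> vec3" where
  "d2vec t = vec3 (sgn_star (t$1) * \<bar>t$3\<bar>) (sgn_star (t$2) * \<bar>t$3\<bar>)
                  (- sgn_star (t$3) * (\<bar>t$1\<bar> + \<bar>t$2\<bar>))"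

definition d1vec :: "vec3 \<Rightarrow> vec3" where
  "d1vec t = cross3 (d2vec t) t"

text \<open>An element is given by its four global vertex numbers (v1,v2,v3,v4); its
  local vertex i is the i-th component.
  X assigns to every global vertex number its position.\<close>
type_synonym elem = "nat \<times> nat \<times> nat \<times> nat"

definition gv :: "elem \<Rightarrow> nat \<Rightarrow> nat" where
  "gv e i = (case e of (a, b, c, d) \<Rightarrow>
      (if i = 1 then a else if i = 2 then b else if i = 3 then c else d))"

definition locEdges :: "(nat \<times> nat) list" where
  "locEdges = [(1,2),(1,3),(1,4),(2,3),(2,4),(3,4)]"

definition locFaces :: "(nat \<times> nat \<times> nat) list" where
  "locFaces = [(1,2,3),(1,2,4),(1,3,4),(2,3,4)]"

definition faceEdges :: "nat \<times> nat \<times> nat \<Rightarrow> (nat \<times> nat) set" where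
  "faceEdges k = (case k of (a, b, c) \<Rightarrow> {(a,b),(a,c),(b,c)})"

definition minEdge :: "nat \<times> nat \<times> nat \<Rightarrow> nat \<times> nat" where
  "minEdge k = (case k of (a, b, c) \<Rightarrow> (a, b))"

definition ge :: "elem \<Rightarrow> nat \<times> nat \<Rightarrow> nat \<times> nat" where
  "ge e j = (gv e (fst j), gv e (snd j))"

definition gf :: "elem \<Rightarrow> nat \<times> nat \<times> nat \<Rightarrow> nat \<times> nat \<times> nat" where
  "gf e k = (case k of (a, b, c) \<Rightarrow> (gv e a, gv e b, gv e c))"

definition tet :: "(nat \<Rightarrow> vec3) \<Rightarrow> elem \<Rightarrow> vec3 set" where
  "tet X e = convex hull {X (gv e 1), X (gv e 2), X (gv e 3), X (gv e 4)}"

definition edgeSet :: "(nat \<Rightarrow> vec3) \<Rightarrow> nat \<times> nat \<Rightarrow> vec3 set" where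
  "edgeSet X g = closed_segment (X (fst g)) (X (snd g))"

definition faceSet :: "(nat \<Rightarrow> vec3) \<Rightarrow> nat \<times> nat \<times> nat \<Rightarrow> vec3 set" where
  "faceSet X f = (case f of (a, b, c) \<Rightarrow> convex hull {X a, X b, X c})"

definition vertsOf :: "elem \<Rightarrow> nat set" where
  "vertsOf e = {gv e 1, gv e 2, gv e 3, gv e 4}"

text \<open>Jacobian of x(xi,eta,zeta) = X v1 + xi (X v4 - X v1) + eta (X v3 - X v1)
  + zeta (X v2 - X v1), which realises lambda1 = 1-xi-eta-zeta, lambda2 = zeta,
  lambda3 = eta, lambda4 = xi.\<close>
definition Jmat :: "(nat \<Rightarrow> vec3) \<Rightarrow> elem \<Rightarrow> mat3" where
  "Jmat X e = transpose (vector [X (gv e 4) - X (gv e 1), X (gv e 3) - X (gv e 1),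
                                  X (gv e 2) - X (gv e 1)])"

definition refMap :: "(nat \<Rightarrow> vec3) \<Rightarrow> elem \<Rightarrow> vec3 \<Rightarrow> vec3" where
  "refMap X e xi = X (gv e 1) + Jmat X e *v xi"

definition bary :: "(nat \<Rightarrow> vec3) \<Rightarrow> elem \<Rightarrow> nat \<Rightarrow> vec3 \<Rightarrow> real" where
  "bary X e i x = (let xi = matrix_inv (Jmat X e) *v (x - X (gv e 1)) in
     (if i = 1 then 1 - xi$1 - xi$2 - xi$3 else if i = 2 then xi$3
      else if i = 3 then xi$2 else xi$1))"

definition oriented_conforming_mesh :: "(nat \<Rightarrow> vec3) \<Rightarrow> elem set \<Rightarrow> bool" where
  "oriented_conforming_mesh X Els \<longleftrightarrow> finite Els \<and>
     (\<forall>e\<in>Els. gv e 1 < gv e 2 \<and> gv e 2 < gv e 3 \<and> gv e 3 < gv e 4 \<and> det (Jmat X e) \<noteq> 0) \<and>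
     (\<forall>e1\<in>Els. \<forall>e2\<in>Els. e1 \<noteq> e2 \<longrightarrow>
        tet X e1 \<inter> tet X e2 = convex hull (X ` (vertsOf e1 \<inter> vertsOf e2)))"

definition meshDomain :: "(nat \<Rightarrow> vec3) \<Rightarrow> elem set \<Rightarrow> vec3 set" where
  "meshDomain X Els = (\<Union>e\<in>Els. tet X e)"

definition tauRef :: "nat \<times> nat \<Rightarrow> vec3" where
  "tauRef j = (if j = (1,2) then e3v else if j = (1,3) then e2v else if j = (1,4) then e1v
     else if j = (2,3) then e2v - e3v else if j = (2,4) then e1v - e3v else e1v - e2v)"

definition kappaRef :: "nat \<times> nat \<Rightarrow> vec3 \<times> vec3" where
  "kappaRef j = (if j = (1,2) then (- e2v, - e1v) else if j = (1,3) then (e3v, - e1v)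
     else if j = (1,4) then (e3v, e2v)
     else if j = (2,3) then (e1v + e2v + e3v, - e1v)
     else if j = (2,4) then (e1v + e2v + e3v, e2v) else (e1v + e2v + e3v, - e3v))"

definition nuRef :: "nat \<times> nat \<times> nat \<Rightarrow> vec3" where
  "nuRef k = (if k = (1,2,3) then - e1v else if k = (1,2,4) then e2v
     else if k = (1,3,4) then - e3v else - (e1v + e2v + e3v))"

definition tvec :: "(nat \<Rightarrow> vec3) \<Rightarrow> elem \<Rightarrow> nat \<times> nat \<Rightarrow> vec3" where
  "tvec X e j = Jmat X e *v tauRef j"

definition nvec :: "(nat \<Rightarrow> vec3) \<Rightarrow> elem \<Rightarrow> nat \<times> nat \<times> nat \<Rightarrow> vec3" where
  "nvec X e k = det (Jmat X e) *\<^sub>R (transpose (matrix_inv (Jmat X e)) *v nuRef k)"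

definition kvec :: "(nat \<Rightarrow> vec3) \<Rightarrow> elem \<Rightarrow> nat \<times> nat \<times> nat \<Rightarrow> nat \<times> nat \<Rightarrow> vec3" where
  "kvec X e k j = (let Jit = transpose (matrix_inv (Jmat X e));
      ka = Jit *v fst (kappaRef j); kb = Jit *v snd (kappaRef j) in
      (if cross3 (nvec X e k) ka \<noteq> 0 then ka else kb))"

definition Qmat :: "vec3 \<Rightarrow> mat3" where
  "Qmat n = (norm n)\<^sup>2 *\<^sub>R mat 1 - outer n n"

definition mvec :: "(nat \<Rightarrow> vec3) \<Rightarrow> elem \<Rightarrow> nat \<times> nat \<times> nat \<Rightarrow> nat \<times> nat \<Rightarrow> vec3" where
  "mvec X e k j = Qmat (nvec X e k) *v kvec X e k j"

text \<open>Scalar functions are given globally (assembled): edgeFun q g i is the i-th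
  degree-q edge function of global edge g, faceFun q f i of global face f,
  cellFun q e i the i-th cell function of element e.\<close>

definition poly_on :: "vec3 set \<Rightarrow> nat \<Rightarrow> (vec3 \<Rightarrow> real) \<Rightarrow> bool" where
  "poly_on S q f \<longleftrightarrow> (\<exists>c :: nat \<Rightarrow> nat \<Rightarrow> nat \<Rightarrow> real. \<forall>x\<in>S.
     f x = (\<Sum>(a, b, d) \<in> {(a, b, d). a + b + d \<le> q}. c a b d * (x$1)^a * (x$2)^b * (x$3)^d))"

datatype sidx = SV nat | SE "nat \<times> nat" nat | SF "nat \<times> nat \<times> nat" nat | SC nat

definition sIdx :: "nat \<Rightarrow> sidx set" where
  "sIdx q = {SV i | i. i \<in> {1..4}} \<union> {SE j i | j i. j \<in> set locEdges \<and> i < q - 1}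
     \<union> {SF k i | k i. k \<in> set locFaces \<and> i < (q - 2) * (q - 1) div 2}
     \<union> {SC i | i. i < (q - 3) * (q - 2) * (q - 1) div 6}"

definition sFam ::
  "(nat \<Rightarrow> vec3) \<Rightarrow> nat \<Rightarrow> (nat \<Rightarrow> nat \<times> nat \<Rightarrow> nat \<Rightarrow> vec3 \<Rightarrow> real)
   \<Rightarrow> (nat \<Rightarrow> nat \<times> nat \<times> nat \<Rightarrow> nat \<Rightarrow> vec3 \<Rightarrow> real) \<Rightarrow> (nat \<Rightarrow> elem \<Rightarrow> nat \<Rightarrow> vec3 \<Rightarrow> real)
   \<Rightarrow> elem \<Rightarrow> sidx \<Rightarrow> vec3 \<Rightarrow> real" where
  "sFam X q edgeFun faceFun cellFun e s = (case s of
      SV i \<Rightarrow> bary X e i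
    | SE j i \<Rightarrow> edgeFun q (ge e j) i
    | SF k i \<Rightarrow> faceFun q (gf e k) i
    | SC i \<Rightarrow> cellFun q e i)"

definition hier_basis ::
  "(nat \<Rightarrow> vec3) \<Rightarrow> elem set \<Rightarrow> nat \<Rightarrow> (nat \<Rightarrow> nat \<times> nat \<Rightarrow> nat \<Rightarrow> vec3 \<Rightarrow> real)
   \<Rightarrow> (nat \<Rightarrow> nat \<times> nat \<times> nat \<Rightarrow> nat \<Rightarrow> vec3 \<Rightarrow> real) \<Rightarrow> (nat \<Rightarrow> elem \<Rightarrow> nat \<Rightarrow> vec3 \<Rightarrow> real) \<Rightarrow> bool" where
  "hier_basis X Els q edgeFun faceFun cellFun \<longleftrightarrow>
    (\<forall>e\<in>Els.
      \<comment> \<open>the local functions form a basis of P^q(T)\<close>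
      (\<forall>s\<in>sIdx q. poly_on (tet X e) q (sFam X q edgeFun faceFun cellFun e s)) \<and>
      (\<forall>g. poly_on (tet X e) q g \<longrightarrow>
         (\<exists>!c. (\<forall>s. s \<notin> sIdx q \<longrightarrow> c s = 0) \<and>
               (\<forall>x\<in>tet X e. g x = (\<Sum>s\<in>sIdx q. c s * sFam X q edgeFun faceFun cellFun e s x)))) \<and>
      \<comment> \<open>edge functions vanish on the other edges of T\<close>
      (\<forall>j\<in>set locEdges. \<forall>j'\<in>set locEdges. \<forall>i<q - 1. j' \<noteq> j \<longrightarrow>
         (\<forall>x\<in>edgeSet X (ge e j'). edgeFun q (ge e j) i x = 0)) \<and>
      \<comment> \<open>face functions vanish on the other faces of T\<close>
      (\<forall>k\<in>set locFaces. \<forall>k'\<in>set locFaces. \<forall>i<(q - 2) * (q - 1) div 2. k' \<noteq> k \<longrightarrow>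
         (\<forall>x\<in>faceSet X (gf e k'). faceFun q (gf e k) i x = 0)) \<and>
      \<comment> \<open>cell functions vanish on the boundary of T\<close>
      (\<forall>k\<in>set locFaces. \<forall>i<(q - 3) * (q - 2) * (q - 1) div 6.
         (\<forall>x\<in>faceSet X (gf e k). cellFun q e i x = 0)) \<and>
      \<comment> \<open>assembly: a shared function is zero on elements not containing its entity\<close>
      (\<forall>g i. g \<notin> ge e ` set locEdges \<longrightarrow> (\<forall>x\<in>tet X e. edgeFun q g i x = 0)) \<and>
      (\<forall>f i. f \<notin> gf e ` set locFaces \<longrightarrow> (\<forall>x\<in>tet X e. faceFun q f i x = 0)) \<and>
      (\<forall>e'\<in>Els. \<forall>i. e' \<noteq> e \<longrightarrow> (\<forall>x\<in>tet X e. cellFun q e' i x = 0)))"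

datatype bidx =
    BEdge "nat \<times> nat" nat nat                  \<comment> \<open>global edge, scalar index, d1/d2 (1/2)\<close>
  | BEdgeFace "nat \<times> nat \<times> nat" "nat \<times> nat" nat nat \<comment> \<open>global face, global edge, index, kind t/m/n (0/1/2)\<close>
  | BFace "nat \<times> nat \<times> nat" nat nat           \<comment> \<open>global face, index, kind 0..4\<close>
  | BCellE elem "nat \<times> nat" nat                \<comment> \<open>phi Id, phi in E^(p+1)_j(T)\<close>
  | BCellF elem "nat \<times> nat \<times> nat" nat         \<comment> \<open>phi Id, phi in F^(p+1)_k(T)\<close>
  | BCellC elem nat                           \<comment> \<open>phi Id, phi in C^(p+1)(T)\<close>
  | BCellFN elem "nat \<times> nat \<times> nat" nat nat     \<comment> \<open>local face, index, kind t/m/n tensor n\<close>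
  | BCellSl elem nat mat3                     \<comment> \<open>phi T, phi in C^p(T), T in sl(3)\<close>

definition validIdx :: "elem set \<Rightarrow> nat \<Rightarrow> bidx \<Rightarrow> bool" where
  "validIdx Els p b = (case b of
      BEdge g i s \<Rightarrow> (\<exists>e\<in>Els. g \<in> ge e ` set locEdges) \<and> i < p - 1 \<and> s \<in> {1, 2}
    | BEdgeFace f g i r \<Rightarrow> (\<exists>e\<in>Els. \<exists>k\<in>set locFaces. gf e k = f \<and> g \<in> ge e ` faceEdges k)
                           \<and> i < p - 1 \<and> r < 3
    | BFace f i r \<Rightarrow> (\<exists>e\<in>Els. f \<in> gf e ` set locFaces) \<and> i < (p - 2) * (p - 1) div 2 \<and> r < 5
    | BCellE e g i \<Rightarrow> e \<in> Els \<and> g \<in> ge e ` set locEdges \<and> i < Suc p - 1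
    | BCellF e f i \<Rightarrow> e \<in> Els \<and> f \<in> gf e ` set locFaces \<and> i < (Suc p - 2) * (Suc p - 1) div 2
    | BCellC e i \<Rightarrow> e \<in> Els \<and> i < (Suc p - 3) * (Suc p - 2) * (Suc p - 1) div 6
    | BCellFN e k i r \<Rightarrow> e \<in> Els \<and> k \<in> set locFaces \<and> i < (p - 2) * (p - 1) div 2 \<and> r < 3
    | BCellSl e i M \<Rightarrow> e \<in> Els \<and> i < (p - 3) * (p - 2) * (p - 1) div 6 \<and> trace M = 0)"

definition faceTensor :: "(nat \<Rightarrow> vec3) \<Rightarrow> elem \<Rightarrow> nat \<times> nat \<times> nat \<Rightarrow> nat \<Rightarrow> mat3" where
  "faceTensor X e k r = (let j = minEdge k; t = tvec X e j; m = mvec X e k j; n = nvec X e k in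
     (if r = 0 then outer t m else if r = 1 then outer m t
      else if r = 2 then outer t t - outer m m else if r = 3 then outer n t else outer n m))"

text \<open>value at x of the restriction to element e of the assembled basis function b\<close>
definition bval ::
  "(nat \<Rightarrow> vec3) \<Rightarrow> nat \<Rightarrow> (nat \<Rightarrow> nat \<times> nat \<Rightarrow> nat \<Rightarrow> vec3 \<Rightarrow> real)
   \<Rightarrow> (nat \<Rightarrow> nat \<times> nat \<times> nat \<Rightarrow> nat \<Rightarrow> vec3 \<Rightarrow> real) \<Rightarrow> (nat \<Rightarrow> elem \<Rightarrow> nat \<Rightarrow> vec3 \<Rightarrow> real)
   \<Rightarrow> bidx \<Rightarrow> elem \<Rightarrow> vec3 \<Rightarrow> mat3" where
  "bval X p edgeFun faceFun cellFun b e x = (case b of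
      BEdge g i s \<Rightarrow> (\<Sum>j\<in>{j\<in>set locEdges. ge e j = g}.
          edgeFun p g i x *\<^sub>R outer (if s = 1 then d1vec (tvec X e j) else d2vec (tvec X e j)) (tvec X e j))
    | BEdgeFace f g i r \<Rightarrow> (\<Sum>k\<in>{k\<in>set locFaces. gf e k = f}. \<Sum>j\<in>{j\<in>faceEdges k. ge e j = g}.
          edgeFun p g i x *\<^sub>R outer (if r = 0 then tvec X e j else if r = 1 then mvec X e k j else nvec X e k)
                                   (kvec X e k j))
    | BFace f i r \<Rightarrow> (\<Sum>k\<in>{k\<in>set locFaces. gf e k = f}. faceFun p f i x *\<^sub>R faceTensor X e k r)
    | BCellE e' g i \<Rightarrow> (if e' = e then edgeFun (Suc p) g i x *\<^sub>R mat 1 else 0)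
    | BCellF e' f i \<Rightarrow> (if e' = e then faceFun (Suc p) f i x *\<^sub>R mat 1 else 0)
    | BCellC e' i \<Rightarrow> (if e' = e then cellFun (Suc p) e i x *\<^sub>R mat 1 else 0)
    | BCellFN e' k i r \<Rightarrow> (if e' = e then
          faceFun p (gf e k) i x *\<^sub>R outer (if r = 0 then tvec X e (minEdge k)
               else if r = 1 then mvec X e k (minEdge k) else nvec X e k) (nvec X e k) else 0)
    | BCellSl e' i M \<Rightarrow> (if e' = e then cellFun p e i x *\<^sub>R M else 0))"

definition fieldOn ::
  "(nat \<Rightarrow> vec3) \<Rightarrow> nat \<Rightarrow> (nat \<Rightarrow> nat \<times> nat \<Rightarrow> nat \<Rightarrow> vec3 \<Rightarrow> real)
   \<Rightarrow> (nat \<Rightarrow> nat \<times> nat \<times> nat \<Rightarrow> nat \<Rightarrow> vec3 \<Rightarrow> real) \<Rightarrow> (nat \<Rightarrow> elem \<Rightarrow> nat \<Rightarrow> vec3 \<Rightarrow> real)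
   \<Rightarrow> (bidx \<Rightarrow> real) \<Rightarrow> elem \<Rightarrow> vec3 \<Rightarrow> mat3" where
  "fieldOn X p edgeFun faceFun cellFun c e x =
     (\<Sum>b\<in>{b. c b \<noteq> 0}. c b *\<^sub>R bval X p edgeFun faceFun cellFun b e x)"

end

theory Submission
  imports Defs
begin
lemma vec3_nth[simp]: "vec3 a b c $ 1 = a" "vec3 a b c $ 2 = b" "vec3 a b c $ 3 = c"
  by (simp_all add: vec3_def)

lemma vec3_eq_iff: "(x::vec3) = y \<longleftrightarrow> x$1 = y$1 \<and> x$2 = y$2 \<and> x$3 = y$3"
  by (simp add: vec_eq_iff forall_3)

lemma vec3_ops[simp]:
  "vec3 a b c + vec3 d e f = vec3 (a+d) (b+e) (c+f)"
  "vec3 a b c - vec3 d e f = vec3 (a-d) (b-e) (c-f)"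
  "- vec3 a b c = vec3 (-a) (-b) (-c)"
  "r *\<^sub>R vec3 a b c = vec3 (r*a) (r*b) (r*c)"
  "vec3 a b c = vec3 d e f \<longleftrightarrow> a = d \<and> b = e \<and> c = f"
  "vec3 a b c = 0 \<longleftrightarrow> a = 0 \<and> b = 0 \<and> c = 0"
  "cross3 (vec3 a b c) (vec3 d e f) = vec3 (b*f - c*e) (c*d - a*f) (a*e - b*d)"
  by (auto simp: vec3_eq_iff cross3_def)
lemmas refv = e1v_def e2v_def e3v_def

definition ksel :: "nat \<times> nat \<times> nat \<Rightarrow> nat \<times> nat \<Rightarrow> vec3" where
  "ksel k j = (if cross3 (nuRef k) (fst (kappaRef j)) \<noteq> 0 then fst (kappaRef j) else snd (kappaRef j))"

lemma locFaces_cases: "k \<in> set locFaces \<longleftrightarrow> k = (1,2,3) \<or> k = (1,2,4) \<or> k = (1,3,4) \<or> k = (2,3,4)"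
  by (simp add: locFaces_def)

lemma R1: "k \<in> set locFaces \<Longrightarrow> j \<in> faceEdges k \<Longrightarrow> cross3 (nuRef k) (ksel k j) = tauRef j"
  unfolding locFaces_cases
  by (elim disjE; simp add: faceEdges_def; elim disjE; simp add: ksel_def nuRef_def kappaRef_def tauRef_def refv)

lemma R2: "k \<in> set locFaces \<Longrightarrow> k0 \<in> set locFaces \<Longrightarrow> k \<noteq> k0 \<Longrightarrow> j \<in> faceEdges k \<Longrightarrow> j \<in> faceEdges k0
  \<Longrightarrow> cross3 (nuRef k0) (ksel k j) = 0"
  unfolding locFaces_cases
  by (elim disjE; simp add: faceEdges_def; elim disjE; simp add: ksel_def nuRef_def kappaRef_def tauRef_def refv)

lemma R3: "(a,b,c) \<in> set locFaces \<Longrightarrow> cross3 (tauRef (a,b)) (tauRef (a,c)) = nuRef (a,b,c)"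
  unfolding locFaces_cases
  by (elim disjE; simp add: nuRef_def tauRef_def refv)
lemma Jmv: "Jmat X e *v w = w$1 *\<^sub>R (X (gv e 4) - X (gv e 1)) + w$2 *\<^sub>R (X (gv e 3) - X (gv e 1))
   + w$3 *\<^sub>R (X (gv e 2) - X (gv e 1))"
  by (simp add: Jmat_def vec_eq_iff matrix_vector_mult_def transpose_def sum_3 vector_def forall_3 algebra_simps)

lemma locEdges_cases: "j \<in> set locEdges \<longleftrightarrow> j = (1,2) \<or> j = (1,3) \<or> j = (1,4) \<or> j = (2,3) \<or> j = (2,4) \<or> j = (3,4)"
  by (simp add: locEdges_def)

lemma tvec_eq: "j \<in> set locEdges \<Longrightarrow> tvec X e j = X (gv e (snd j)) - X (gv e (fst j))"
  unfolding locEdges_cases tvec_def Jmv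
  by (elim disjE; simp add: tauRef_def refv vec_eq_iff forall_3 algebra_simps)

lemma inv_facts:
  assumes "det (J::real^3^3) \<noteq> 0"
  shows "J ** matrix_inv J = mat 1" "matrix_inv J ** J = mat 1"
proof -
  have "invertible J" using assms invertible_det_nz by blast
  then have "\<exists>A'. J ** A' = mat 1 \<and> A' ** J = mat 1" by (simp add: invertible_def)
  then have "J ** matrix_inv J = mat 1 \<and> matrix_inv J ** J = mat 1"
    unfolding matrix_inv_def by (rule someI_ex)
  then show "J ** matrix_inv J = mat 1" "matrix_inv J ** J = mat 1" by auto
qed

lemma L5:
  assumes "det (J::real^3^3) \<noteq> 0"
  shows "cross3 (J *v a) (J *v b) = det J *\<^sub>R (transpose (matrix_inv J) *v cross3 a b)"
proof -
  have "transpose (matrix_inv J) ** transpose J = mat 1"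
    using inv_facts(1)[OF assms] by (metis matrix_transpose_mul transpose_mat)
  then have "cross3 (J *v a) (J *v b) = transpose (matrix_inv J) *v (transpose J *v cross3 (J *v a) (J *v b))"
    by (metis matrix_vector_mul_assoc matrix_vector_mul_lid)
  also have "\<dots> = transpose (matrix_inv J) *v (det J *\<^sub>R cross3 a b)"
    by (simp only: cross_matrix_mult)
  also have "\<dots> = det J *\<^sub>R (transpose (matrix_inv J) *v cross3 a b)"
    by (rule matrix_vector_mult_scaleR)
  finally show ?thesis .
qed

lemma L1:
  assumes "det (Jmat X e) \<noteq> 0"
  shows "cross3 (nvec X e k) (transpose (matrix_inv (Jmat X e)) *v a) = Jmat X e *v cross3 (nuRef k) a"
proof -
  define J where "J = Jmat X e"
  define G where "G = transpose (matrix_inv J)"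
  have dJ: "det J \<noteq> 0" using assms J_def by simp
  have W: "matrix_inv J *v cross3 (G *v nuRef k) (G *v a) = det G *\<^sub>R cross3 (nuRef k) a"
    using cross_matrix_mult[of G "nuRef k" a] by (simp add: G_def)
  have "cross3 (G *v nuRef k) (G *v a) = J *v (matrix_inv J *v cross3 (G *v nuRef k) (G *v a))"
    by (simp add: matrix_vector_mul_assoc inv_facts(1)[OF dJ])
  also have "\<dots> = det G *\<^sub>R (J *v cross3 (nuRef k) a)"
    using W by (simp add: matrix_vector_mult_scaleR)
  finally have C: "cross3 (G *v nuRef k) (G *v a) = det G *\<^sub>R (J *v cross3 (nuRef k) a)" .
  have "det J * det G = 1"
    using inv_facts(1)[OF dJ] by (metis G_def det_I det_mul det_transpose)
  then show ?thesis
    unfolding nvec_def J_def[symmetric] G_def[symmetric]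
    by (simp add: cross_mult_left C)
qed
declare transpose_matrix_vector[simp del]

lemma Jinj: "det (J::real^3^3) \<noteq> 0 \<Longrightarrow> J *v y = 0 \<longleftrightarrow> y = 0"
  by (metis inv_facts(2) matrix_vector_mul_assoc matrix_vector_mul_lid matrix_vector_mult_0_right)

lemma kvec_eq: "det (Jmat X e) \<noteq> 0 \<Longrightarrow> kvec X e k j = transpose (matrix_inv (Jmat X e)) *v ksel k j"
  unfolding kvec_def Let_def ksel_def by (simp add: L1 Jinj)

lemma nvec_eq: "det (Jmat X e) \<noteq> 0 \<Longrightarrow> (a,b,c) \<in> set locFaces \<Longrightarrow>
   nvec X e (a,b,c) = cross3 (tvec X e (a,b)) (tvec X e (a,c))"
  unfolding tvec_def by (simp add: L5 R3 nvec_def)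

lemma cross_nk: "det (Jmat X e) \<noteq> 0 \<Longrightarrow> k \<in> set locFaces \<Longrightarrow> j \<in> faceEdges k \<Longrightarrow>
   cross3 (nvec X e k) (kvec X e k j) = tvec X e j"
  by (simp add: kvec_eq L1 R1 tvec_def)

lemma cross_nk0: "det (Jmat X e) \<noteq> 0 \<Longrightarrow> k \<in> set locFaces \<Longrightarrow> k0 \<in> set locFaces \<Longrightarrow> k \<noteq> k0 \<Longrightarrow>
   j \<in> faceEdges k \<Longrightarrow> j \<in> faceEdges k0 \<Longrightarrow>
   cross3 (nvec X e k0) (kvec X e k j) = 0"
  by (simp add: kvec_eq L1 R2)

lemma Qmat_cross: "Qmat n *v v = - cross3 n (cross3 n v)"
  by (simp add: Qmat_def outer_def vec_eq_iff forall_3 cross3_def matrix_vector_mult_def sum_3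
     norm_vec_def L2_set_def power2_eq_square algebra_simps mat_def)

lemma mvec_eq: "det (Jmat X e) \<noteq> 0 \<Longrightarrow> k \<in> set locFaces \<Longrightarrow> j \<in> faceEdges k \<Longrightarrow>
   mvec X e k j = - cross3 (nvec X e k) (tvec X e j)"
  by (simp add: mvec_def Qmat_cross cross_nk)
definition srt :: "elem \<Rightarrow> bool" where
  "srt e \<longleftrightarrow> gv e 1 < gv e 2 \<and> gv e 2 < gv e 3 \<and> gv e 3 < gv e 4"


lemma C1: "srt e \<Longrightarrow> j \<in> set locEdges \<Longrightarrow> j' \<in> set locEdges \<Longrightarrow> ge e j = ge e j' \<Longrightarrow> j = j'"
  apply (cases e)
  unfolding locEdges_cases
  by (elim disjE; simp add: ge_def gv_def srt_def)

lemma C2: "srt e \<Longrightarrow> k \<in> set locFaces \<Longrightarrow> k' \<in> set locFaces \<Longrightarrow> gf e k = gf e k' \<Longrightarrow> k = k'"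
  apply (cases e)
  unfolding locFaces_cases
  by (elim disjE; simp add: gf_def gv_def srt_def)

definition edgesF :: "nat \<times> nat \<times> nat \<Rightarrow> (nat \<times> nat) set" where
  "edgesF F = (case F of (A,B,C) \<Rightarrow> {(A,B),(A,C),(B,C)})"

lemma C3: "k \<in> set locFaces \<Longrightarrow> ge e ` faceEdges k = edgesF (gf e k)"
  unfolding locFaces_cases
  by (elim disjE; simp add: ge_def gf_def faceEdges_def edgesF_def)

lemma C3b: "k \<in> set locFaces \<Longrightarrow> faceEdges k \<subseteq> set locEdges"
  unfolding locFaces_cases
  by (elim disjE; simp add: faceEdges_def locEdges_def)

lemma C5: "srt e \<Longrightarrow> srt e' \<Longrightarrow> e \<noteq> e' \<Longrightarrow> k \<in> set locFaces \<Longrightarrow> k' \<in> set locFaces \<Longrightarrow>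
  gf e k = gf e' k' \<Longrightarrow> j \<in> set locEdges \<Longrightarrow> j \<notin> faceEdges k \<Longrightarrow> j' \<in> set locEdges \<Longrightarrow>
  ge e j = ge e' j' \<Longrightarrow> False"
  apply (cases e; cases e')
  unfolding locFaces_cases locEdges_cases
  by (elim disjE; simp add: faceEdges_def ge_def gf_def gv_def srt_def; elim disjE; simp; elim disjE; simp)


lemma outer_Anti: "outer a b ** transpose (Anti n) = outer a (cross3 n b)"
  by (simp add: vec_eq_iff forall_3 matrix_matrix_mult_def sum_3 transpose_def outer_def Anti_def
     cross3_def algebra_simps)

lemma scale_mm: "(c *\<^sub>R M) ** (A::real^3^3) = c *\<^sub>R (M ** A)"
  by (simp add: vec_eq_iff matrix_matrix_mult_def sum_distrib_left algebra_simps)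

lemma symm_scale: "symm (c *\<^sub>R M) = c *\<^sub>R symm M"
  by (simp add: symm_def algebra_simps transpose_def vec_eq_iff)

lemma symm_zero[simp]: "symm 0 = 0"
  by (simp add: symm_def vec_eq_iff transpose_def)

lemma symm_Anti: "symm ((c *\<^sub>R mat 1) ** transpose (Anti n)) = 0"
  by (simp add: scale_mm symm_scale symm_def vec_eq_iff forall_3 transpose_def Anti_def)

lemma mm_lzero: "(0::real^3^3) ** A = 0"
  by (simp add: vec_eq_iff matrix_matrix_mult_def)

lemma mm_add: "((M::real^3^3) + N) ** A = M ** A + N ** A"
  by (simp add: vec_eq_iff matrix_matrix_mult_def sum.distrib algebra_simps)

lemma symm_add: "symm (M + N) = symm M + symm N"
  by (simp add: symm_def vec_eq_iff transpose_def algebra_simps)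

lemma symmL: "symm ((\<Sum>b\<in>S. M b) ** (A::real^3^3)) = (\<Sum>b\<in>S. symm (M b ** A))"
proof (cases "finite S")
  case True then show ?thesis
  proof (induction S rule: finite_induct)
    case empty then show ?case by (simp add: mm_lzero)
  next
    case (insert a F) then show ?case
      by (simp add: mm_add symm_add)
  qed
next
  case False then show ?thesis by (simp add: mm_lzero)
qed

definition NF :: "(nat \<Rightarrow> vec3) \<Rightarrow> nat \<times> nat \<times> nat \<Rightarrow> vec3" where
  "NF X F = (case F of (A,B,C) \<Rightarrow> cross3 (X B - X A) (X C - X A))"

definition TG :: "(nat \<Rightarrow> vec3) \<Rightarrow> nat \<times> nat \<Rightarrow> vec3" where
  "TG X g = X (snd g) - X (fst g)"

lemma tvec_G: "j \<in> set locEdges \<Longrightarrow> tvec X e j = TG X (ge e j)"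
  by (simp add: tvec_eq TG_def ge_def)

lemma nvec_G: "det (Jmat X e) \<noteq> 0 \<Longrightarrow> k \<in> set locFaces \<Longrightarrow> nvec X e k = NF X (gf e k)"
  apply (cases k)
  apply (simp add: nvec_eq)
  unfolding locFaces_cases
  by (elim disjE; simp add: tvec_eq NF_def gf_def locEdges_def)
lemma hb_edge: "hier_basis X Els q eF fF cF \<Longrightarrow> e \<in> Els \<Longrightarrow> g \<notin> ge e ` set locEdges \<Longrightarrow> x \<in> tet X e
  \<Longrightarrow> eF q g i x = 0"
  unfolding hier_basis_def by blast

lemma hb_face: "hier_basis X Els q eF fF cF \<Longrightarrow> e \<in> Els \<Longrightarrow> k \<in> set locFaces \<Longrightarrow> k' \<in> set locFaces
  \<Longrightarrow> i < (q - 2) * (q - 1) div 2 \<Longrightarrow> k' \<noteq> k \<Longrightarrow> x \<in> faceSet X (gf e k') \<Longrightarrow> fF q (gf e k) i x = 0"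
  unfolding hier_basis_def by blast

lemma hb_cell: "hier_basis X Els q eF fF cF \<Longrightarrow> e \<in> Els \<Longrightarrow> k \<in> set locFaces
  \<Longrightarrow> i < (q - 3) * (q - 2) * (q - 1) div 6 \<Longrightarrow> x \<in> faceSet X (gf e k) \<Longrightarrow> cF q e i x = 0"
  unfolding hier_basis_def by blast

lemma face_sub: "k \<in> set locFaces \<Longrightarrow> faceSet X (gf e k) \<subseteq> tet X e"
  unfolding locFaces_cases tet_def
  by (elim disjE; simp add: faceSet_def gf_def; rule hull_mono; blast)

lemma mesh_e: "oriented_conforming_mesh X Els \<Longrightarrow> e \<in> Els \<Longrightarrow> srt e \<and> det (Jmat X e) \<noteq> 0"
  unfolding oriented_conforming_mesh_def srt_def by blast

definition dd :: "nat \<Rightarrow> vec3 \<Rightarrow> vec3" where "dd s t = (if s = 1 then d1vec t else d2vec t)"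

definition aa :: "(nat \<Rightarrow> vec3) \<Rightarrow> nat \<times> nat \<times> nat \<Rightarrow> nat \<Rightarrow> nat \<times> nat \<Rightarrow> vec3" where
  "aa X F r g = (if r = 0 then TG X g else if r = 1 then - cross3 (NF X F) (TG X g) else NF X F)"

definition FTG :: "(nat \<Rightarrow> vec3) \<Rightarrow> nat \<times> nat \<times> nat \<Rightarrow> nat \<Rightarrow> mat3" where
  "FTG X F r = (let t = TG X (fst F, fst (snd F)); n = NF X F; m = - cross3 n t in
     (if r = 0 then outer t m else if r = 1 then outer m t
      else if r = 2 then outer t t - outer m m else if r = 3 then outer n t else outer n m))"


context
  fixes X :: "nat \<Rightarrow> vec3" and Els p eF fF cF e e' k k' F x
  assumes hbp: "hier_basis X Els p eF fF cF"
    and hbp1: "hier_basis X Els (Suc p) eF fF cF"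
    and eE: "e \<in> Els" and eE': "e' \<in> Els" and ne: "e \<noteq> e'"
    and se: "srt e" and se': "srt e'" and dJ: "det (Jmat X e) \<noteq> 0"
    and kL: "k \<in> set locFaces" and kL': "k' \<in> set locFaces"
    and gfk: "gf e k = F" and gfk': "gf e' k' = F" and xF: "x \<in> faceSet X F"
begin

lemma x_tet: "x \<in> tet X e" using face_sub[OF kL, of X e] xF gfk by auto
lemma x_tet': "x \<in> tet X e'" using face_sub[OF kL', of X e'] xF gfk' by auto

lemma oneEdge: "symm (bval X p eF fF cF (BEdge g i s) e x ** A) =
   symm ((eF p g i x *\<^sub>R outer (dd s (TG X g)) (TG X g)) ** A)"
proof (cases "g \<in> ge e ` set locEdges")
  case True
  then obtain j0 where j0: "j0 \<in> set locEdges" "ge e j0 = g" by auto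
  have "{j \<in> set locEdges. ge e j = g} = {j0}" using j0 C1[OF se] by blast
  then show ?thesis using j0 by (simp add: bval_def tvec_G dd_def)
next
  case False
  then have "{j \<in> set locEdges. ge e j = g} = {}" by auto
  moreover have "eF p g i x = 0" using hb_edge[OF hbp eE False x_tet] .
  ultimately show ?thesis by (simp add: bval_def mm_lzero)
qed


lemma sum_singleton_X: "sum f {a} = f a" by simp

lemma nvec_k: "nvec X e k = NF X F" using nvec_G[OF dJ kL] gfk by simp


lemma oneEF: "symm (bval X p eF fF cF (BEdgeFace f g i r) e x ** transpose (Anti (NF X F))) =
   (if f = F \<and> g \<in> edgesF F then symm (eF p g i x *\<^sub>R outer (aa X F r g) (TG X g)) else 0)"
proof -
  let ?A = "transpose (Anti (NF X F))"
  let ?a = "\<lambda>k0 j. (if r = 0 then tvec X e j else if r = 1 then mvec X e k0 j else nvec X e k0)"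
  have T: "\<And>k0 j. symm ((eF p g i x *\<^sub>R outer (?a k0 j) (kvec X e k0 j)) ** ?A) =
     symm (eF p g i x *\<^sub>R outer (?a k0 j) (cross3 (NF X F) (kvec X e k0 j)))"
    by (simp add: scale_mm outer_Anti)
  have B: "symm (bval X p eF fF cF (BEdgeFace f g i r) e x ** ?A) =
     (\<Sum>k0\<in>{k0 \<in> set locFaces. gf e k0 = f}. \<Sum>j\<in>{j \<in> faceEdges k0. ge e j = g}.
        symm (eF p g i x *\<^sub>R outer (?a k0 j) (cross3 (NF X F) (kvec X e k0 j))))"
    unfolding bval_def bidx.case symmL T by (rule refl)
  show ?thesis
  proof (cases "f = F")
    case True
    have K: "{k0 \<in> set locFaces. gf e k0 = f} = {k}" using C2[OF se] kL gfk True by blast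
    show ?thesis
    proof (cases "g \<in> edgesF F")
      case True
      then have "g \<in> ge e ` faceEdges k" using C3[OF kL, of e] gfk by simp
      then obtain j0 where j0: "j0 \<in> faceEdges k" "ge e j0 = g" by (rule imageE) simp
      have j0L: "j0 \<in> set locEdges" using j0 C3b[OF kL] by blast
      have J: "{j \<in> faceEdges k. ge e j = g} = {j0}"
      proof (intro equalityI subsetI)
        fix j assume "j \<in> {j \<in> faceEdges k. ge e j = g}"
        then have "j \<in> set locEdges" "ge e j = ge e j0" using j0 C3b[OF kL] by auto
        then show "j \<in> {j0}" using C1[OF se _ j0L] by simp
      qed (use j0 in simp)
      have "cross3 (NF X F) (kvec X e k j0) = TG X g"
        using cross_nk[OF dJ kL j0(1)] nvec_k tvec_G[OF j0L] j0 by simp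
      moreover have "mvec X e k j0 = - cross3 (NF X F) (TG X g)"
        using mvec_eq[OF dJ kL j0(1)] nvec_k tvec_G[OF j0L] j0 by simp
      ultimately show ?thesis unfolding B K sum_singleton_X J using True \<open>f = F\<close> j0 j0L
        by (simp add: aa_def tvec_G nvec_k)
    next
      case False
      have J0: "{j \<in> faceEdges k. ge e j = g} = {}" using False C3[OF kL, of e] gfk by blast
      show ?thesis unfolding B K sum_singleton_X J0 using False by simp
    qed
  next
    case False
    have "symm (eF p g i x *\<^sub>R outer (?a k0 j) (cross3 (NF X F) (kvec X e k0 j))) = 0"
      if k0: "k0 \<in> set locFaces" "gf e k0 = f" and j: "j \<in> faceEdges k0" "ge e j = g" for k0 j
    proof (cases "j \<in> faceEdges k")
      case True
      have "k0 \<noteq> k" using k0 gfk False by auto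
      then have "cross3 (NF X F) (kvec X e k0 j) = 0"
        using cross_nk0[OF dJ k0(1) kL _ j(1) True] nvec_k by simp
      then show ?thesis by (simp add: outer_def vec_eq_iff symm_def transpose_def)
    next
      case notin: False
      have jL: "j \<in> set locEdges" using j C3b[OF k0(1)] by blast
      have "g \<notin> ge e' ` set locEdges"
      proof
        assume "g \<in> ge e' ` set locEdges"
        then obtain j' where "j' \<in> set locEdges" "ge e' j' = g" by blast
        then show False using C5[OF se se' ne kL kL' _ jL notin] gfk gfk' j by metis
      qed
      then have "eF p g i x = 0" using hb_edge[OF hbp eE' _ x_tet'] by blast
      then show ?thesis by (simp add: symm_scale)
    qed
    then show ?thesis using B False by (simp add: sum.neutral)
  qed
qed


lemma outer_zero[simp]: "outer a 0 = 0" by (simp add: outer_def vec_eq_iff)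

lemma minEdge_in: "minEdge k \<in> faceEdges k" "minEdge k \<in> set locEdges"
  using kL unfolding locFaces_cases
  by (auto simp: minEdge_def faceEdges_def locEdges_def)

lemma ge_min: "ge e (minEdge k) = (fst F, fst (snd F))"
  using kL gfk unfolding locFaces_cases
  by (auto simp: minEdge_def ge_def gf_def)

lemma faceTensor_G: "faceTensor X e k r = FTG X F r"
proof -
  have t: "tvec X e (minEdge k) = TG X (fst F, fst (snd F))"
    using tvec_G[OF minEdge_in(2)] ge_min by simp
  have m: "mvec X e k (minEdge k) = - cross3 (NF X F) (TG X (fst F, fst (snd F)))"
    using mvec_eq[OF dJ kL minEdge_in(1)] t nvec_k by simp
  show ?thesis unfolding faceTensor_def FTG_def Let_def t m nvec_k by (rule refl)
qed

lemma oneFace: "i < (p - 2) * (p - 1) div 2 \<Longrightarrow>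
  symm (bval X p eF fF cF (BFace f i r) e x ** transpose (Anti (NF X F))) =
   (if f = F then symm ((fF p F i x *\<^sub>R FTG X F r) ** transpose (Anti (NF X F))) else 0)"
proof -
  assume ib: "i < (p - 2) * (p - 1) div 2"
  let ?A = "transpose (Anti (NF X F))"
  have B: "symm (bval X p eF fF cF (BFace f i r) e x ** ?A) =
     (\<Sum>k0\<in>{k0 \<in> set locFaces. gf e k0 = f}. symm ((fF p f i x *\<^sub>R faceTensor X e k0 r) ** ?A))"
    unfolding bval_def bidx.case symmL by (rule refl)
  show ?thesis
  proof (cases "f = F")
    case True
    have K: "{k0 \<in> set locFaces. gf e k0 = f} = {k}" using C2[OF se] kL gfk True by blast
    show ?thesis unfolding B K sum_singleton_X faceTensor_G using True by simp
  next
    case False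
    have Z: "fF p f i x = 0" if k0: "k0 \<in> set locFaces" "gf e k0 = f" for k0
    proof -
      have "k0 \<noteq> k" using k0 gfk False by auto
      then show ?thesis using hb_face[OF hbp eE k0(1) kL ib _ ] xF gfk k0 by metis
    qed
    show ?thesis unfolding B using False Z by (auto intro!: sum.neutral simp: mm_lzero)
  qed
qed

lemma oneCellE: "symm (bval X p eF fF cF (BCellE e0 g i) e x ** transpose (Anti (NF X F))) = 0"
  by (simp add: bval_def symm_Anti mm_lzero)
lemma oneCellF: "symm (bval X p eF fF cF (BCellF e0 g i) e x ** transpose (Anti (NF X F))) = 0"
  by (simp add: bval_def symm_Anti mm_lzero)
lemma oneCellC: "symm (bval X p eF fF cF (BCellC e0 i) e x ** transpose (Anti (NF X F))) = 0"
  by (simp add: bval_def symm_Anti mm_lzero)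

lemma oneCellFN: "k0 \<in> set locFaces \<Longrightarrow> i < (p - 2) * (p - 1) div 2 \<Longrightarrow>
   symm (bval X p eF fF cF (BCellFN e0 k0 i r) e x ** transpose (Anti (NF X F))) = 0"
proof -
  assume k0: "k0 \<in> set locFaces" and ib: "i < (p - 2) * (p - 1) div 2"
  show ?thesis
  proof (cases "e0 = e")
    case True
    show ?thesis
    proof (cases "k0 = k")
      case True
      then show ?thesis using \<open>e0 = e\<close> by (simp add: bval_def nvec_k scale_mm outer_Anti symm_scale)
    next
      case False
      have "fF p (gf e k0) i x = 0" using hb_face[OF hbp eE k0 kL ib] False xF gfk by metis
      then show ?thesis using \<open>e0 = e\<close> by (simp add: bval_def mm_lzero)
    qed
  qed (simp add: bval_def mm_lzero)
qed

lemma oneCellSl: "i < (p - 3) * (p - 2) * (p - 1) div 6 \<Longrightarrow>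
   symm (bval X p eF fF cF (BCellSl e0 i M) e x ** transpose (Anti (NF X F))) = 0"
proof -
  assume ib: "i < (p - 3) * (p - 2) * (p - 1) div 6"
  have "cF p e i x = 0" using hb_cell[OF hbp eE kL ib] xF gfk by simp
  then show ?thesis by (simp add: bval_def mm_lzero)
qed


lemma oneAll: "validIdx Els p b \<Longrightarrow>
  symm (bval X p eF fF cF b e x ** transpose (Anti (NF X F))) = (case b of
     BEdge g i s \<Rightarrow> symm ((eF p g i x *\<^sub>R outer (dd s (TG X g)) (TG X g)) ** transpose (Anti (NF X F)))
   | BEdgeFace f g i r \<Rightarrow> (if f = F \<and> g \<in> edgesF F then symm (eF p g i x *\<^sub>R outer (aa X F r g) (TG X g)) else 0)
   | BFace f i r \<Rightarrow> (if f = F then symm ((fF p F i x *\<^sub>R FTG X F r) ** transpose (Anti (NF X F))) else 0)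
   | _ \<Rightarrow> 0)"
proof (cases b)
  case (BEdge g i s) then show ?thesis using oneEdge by simp
next
  case (BEdgeFace f g i r) then show ?thesis using oneEF by simp
next
  case (BFace f i r)
  assume "validIdx Els p b"
  then have "i < (p - 2) * (p - 1) div 2" using BFace by (simp add: validIdx_def)
  then show ?thesis using oneFace BFace by simp
next
  case (BCellE e0 g i) then show ?thesis using oneCellE by simp
next
  case (BCellF e0 g i) then show ?thesis using oneCellF by simp
next
  case (BCellC e0 i) then show ?thesis using oneCellC by simp
next
  case (BCellFN e0 k0 i r)
  assume "validIdx Els p b"
  then have "k0 \<in> set locFaces" "i < (p - 2) * (p - 1) div 2" using BCellFN by (simp_all add: validIdx_def)
  then show ?thesis using oneCellFN BCellFN by simp
next
  case (BCellSl e0 i M)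
  assume "validIdx Els p b"
  then have "i < (p - 3) * (p - 2) * (p - 1) div 6" using BCellSl by (simp add: validIdx_def)
  then show ?thesis using oneCellSl BCellSl by simp
qed

end

lemma field_lin: "symm (fieldOn X p eF fF cF c e x ** A) =
   (\<Sum>b\<in>{b. c b \<noteq> 0}. c b *\<^sub>R symm (bval X p eF fF cF b e x ** A))"
  unfolding fieldOn_def symmL scale_mm symm_scale by (rule refl)

theorem mainTheorem4:
  fixes X :: "nat \<Rightarrow> real^3" and Els :: "elem set" and p :: nat
    and edgeFun :: "nat \<Rightarrow> nat \<times> nat \<Rightarrow> nat \<Rightarrow> real^3 \<Rightarrow> real"
    and faceFun :: "nat \<Rightarrow> nat \<times> nat \<times> nat \<Rightarrow> nat \<Rightarrow> real^3 \<Rightarrow> real"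
    and cellFun :: "nat \<Rightarrow> elem \<Rightarrow> nat \<Rightarrow> real^3 \<Rightarrow> real"
    and c :: "bidx \<Rightarrow> real"
  assumes mesh: "oriented_conforming_mesh X Els"
    and p: "p \<ge> 2"
    and basis_p: "hier_basis X Els p edgeFun faceFun cellFun"
    and basis_p1: "hier_basis X Els (Suc p) edgeFun faceFun cellFun"
    and fin: "finite {b. c b \<noteq> 0}"
    and valid: "\<forall>b. c b \<noteq> 0 \<longrightarrow> validIdx Els p b"
    and interface: "e1 \<in> Els" "e2 \<in> Els" "e1 \<noteq> e2"
      "k1 \<in> set locFaces" "k2 \<in> set locFaces" "gf e1 k1 = gf e2 k2"
    and x: "x \<in> faceSet X (gf e1 k1)"
  shows "symm (fieldOn X p edgeFun faceFun cellFun c e1 x ** transpose (Anti (nvec X e1 k1)))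
       = symm (fieldOn X p edgeFun faceFun cellFun c e2 x ** transpose (Anti (nvec X e1 k1)))"
proof -
  have m1: "srt e1" "det (Jmat X e1) \<noteq> 0" using mesh_e[OF mesh interface(1)] by auto
  have m2: "srt e2" "det (Jmat X e2) \<noteq> 0" using mesh_e[OF mesh interface(2)] by auto
  have N: "nvec X e1 k1 = NF X (gf e1 k1)" using nvec_G[OF m1(2) interface(4)] .
  have x2: "x \<in> faceSet X (gf e1 k1)" using x .
  have "c b *\<^sub>R symm (bval X p edgeFun faceFun cellFun b e1 x ** transpose (Anti (NF X (gf e1 k1)))) =
        c b *\<^sub>R symm (bval X p edgeFun faceFun cellFun b e2 x ** transpose (Anti (NF X (gf e1 k1))))"
    if "b \<in> {b. c b \<noteq> 0}" for b
  proof -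
    have v: "validIdx Els p b" using valid that by auto
    show ?thesis
      using oneAll[OF basis_p basis_p1 interface(1,2,3) m1(1) m2(1) m1(2) interface(4,5) refl
          interface(6)[symmetric] x v]
        oneAll[OF basis_p basis_p1 interface(2,1) interface(3)[symmetric] m2(1) m1(1) m2(2) interface(5,4)
          interface(6)[symmetric] refl x v]
      by simp
  qed
  then show ?thesis unfolding N field_lin by (rule sum.cong[OF refl])
qed

end
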